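(* For all integers $L,M\ge 0$, $$\sum_{i,j\in\mathbb Z}(-1)^{i+j}q^{\binom{i+j+1}{2}}\begin{bmatrix}2L+1\\ L-i\end{bmatrix}_q\begin{bmatrix}2M+1\\ M-j\end{bmatrix}_q=-(q;q)_{2L+1}\,\delta_{L,M}.$$
   Context: $q$ is a complex number with $|q|<1$ (or a formal variable). $(a;q)_n=\prod_{j=0}^{n-1}(1-aq^j)$ for $n\ge0$ (empty product $=1$), and $(q;q)_n$ is also written $(q)_n$. The Gaussian binomial is $\begin{bmatrix}n+m\\ n\end{bmatrix}_q=\frac{(q)_{n+m}}{(q)_n(q)_m}$ if $n,m$ are nonnegative integers and $0$ otherwise; hence only finitely many terms of the sum are nonzero. $\binom{x}{2}=x(x-1)/2$. $\delta_{L,M}$ is the Kronecker delta. *)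

theory Defs
  imports "HOL-Analysis.Analysis"
begin

definition qpoch :: "complex \<Rightarrow> complex \<Rightarrow> nat \<Rightarrow> complex" where
  "qpoch a q n = (\<Prod>j<n. (1 - a * q ^ j))"

definition gauss_binom :: "complex \<Rightarrow> int \<Rightarrow> int \<Rightarrow> complex" where
  "gauss_binom q n m =
     (if n \<ge> 0 \<and> m \<ge> 0
      then qpoch q q (nat (n + m)) / (qpoch q q (nat n) * qpoch q q (nat m))
      else 0)"

definition qbinom :: "complex \<Rightarrow> int \<Rightarrow> int \<Rightarrow> complex" where
  "qbinom q N K = gauss_binom q K (N - K)"

text \<open>binom(x,2) = x(x-1)/2 (always a nonnegative integer for integer x).\<close>
definition choose2 :: "int \<Rightarrow> int" where
  "choose2 x = x * (x - 1) div 2"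

end

theory Submission
  imports Defs
begin

lemma neg1_powi: "(-1::complex) powi k = (if even k then 1 else -1)"
proof (cases "k \<ge> 0")
  case True
  define n where "n = nat k"
  have "k = int n" using True n_def by simp
  then show ?thesis by (simp only: power_int_of_nat minus_one_power_iff even_of_nat_iff)
next
  case False
  define n where "n = nat (-k)"
  have "k = - int n" using False n_def by simp
  then show ?thesis by (simp only: power_int_minus power_int_of_nat minus_one_power_iff even_minus even_of_nat_iff) simp
qed

lemma qpoch_Suc: "qpoch q q (Suc n) = qpoch q q n * (1 - q ^ Suc n)"
  by (simp add: qpoch_def)

lemma qpoch_0[simp]: "qpoch q q 0 = 1"
  by (simp add: qpoch_def)

lemma pow_ne1: "norm (q::complex) < 1 \<Longrightarrow> 1 - q ^ Suc n \<noteq> 0"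
proof
  assume a: "norm q < 1" "1 - q ^ Suc n = 0"
  then have "norm (q ^ Suc n) = 1" by simp
  moreover have "norm (q ^ Suc n) < 1" using a(1)
    unfolding norm_power by (subst power_less_one_iff) auto
  ultimately show False by simp
qed

lemma qpoch_nz: "norm q < 1 \<Longrightarrow> qpoch q q n \<noteq> 0"
  proof (induction n)
  case (Suc n)
  then show ?case unfolding qpoch_Suc using pow_ne1[of q n] by (simp only: mult_eq_0_iff) blast
qed simp

lemma qbinom_closed: "qbinom q (int n) k =
  (if 0 \<le> k \<and> k \<le> int n then qpoch q q n / (qpoch q q (nat k) * qpoch q q (n - nat k)) else 0)"
  unfolding qbinom_def gauss_binom_def
  by (auto simp: nat_diff_distrib)

lemma choose2_2: "2 * choose2 x = x * (x - 1)"
  unfolding choose2_def by simp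

lemma choose2_nn: "choose2 x \<ge> 0"
proof -
  have "x * (x - 1) \<ge> 0"
    by (cases "x \<ge> 1") (auto simp: mult_nonpos_nonpos zero_le_mult_iff)
  then show ?thesis using choose2_2[of x] by linarith
qed

lemma choose2_rec: "choose2 x = choose2 (x - 1) + (x - 1)"
proof -
  have "2 * choose2 x = 2 * (choose2 (x - 1) + (x - 1))"
    using choose2_2[of x] choose2_2[of "x-1"] by (simp add: algebra_simps)
  then show ?thesis by simp
qed



lemma pascal_main:
  assumes q: "norm q < 1"
  shows "qpoch q q (Suc (Suc (m + d))) / (qpoch q q (Suc m) * qpoch q q (Suc d))
       = qpoch q q (Suc (m + d)) / (qpoch q q (Suc m) * qpoch q q d)
         + q ^ Suc d * (qpoch q q (Suc (m + d)) / (qpoch q q m * qpoch q q (Suc d)))"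
proof -
  define A where "A = qpoch q q (Suc (m + d))"
  define B where "B = qpoch q q m"
  define C where "C = qpoch q q d"
  define x where "x = q ^ Suc m"
  define y where "y = q ^ Suc d"
  have nz: "B \<noteq> 0" "C \<noteq> 0" "1 - x \<noteq> 0" "1 - y \<noteq> 0"
    using qpoch_nz[OF q] pow_ne1[OF q] unfolding B_def C_def x_def y_def by auto
  have e1: "qpoch q q (Suc (Suc (m + d))) = A * (1 - x * y)"
    unfolding A_def x_def y_def qpoch_Suc[of q "Suc (m+d)"]
    by (simp add: power_add[symmetric])
  have e2: "qpoch q q (Suc m) = B * (1 - x)" unfolding B_def x_def qpoch_Suc ..
  have e3: "qpoch q q (Suc d) = C * (1 - y)" unfolding C_def y_def qpoch_Suc ..
  define u where "u = 1 - x"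
  define v where "v = 1 - y"
  have xy: "x = 1 - u" "y = 1 - v" unfolding u_def v_def by auto
  have nz2: "B \<noteq> 0" "C \<noteq> 0" "u \<noteq> 0" "v \<noteq> 0" using nz unfolding u_def v_def by auto
  have "A * (1 - x * y) / (B * (1 - x) * (C * (1 - y))) = A / (B * (1 - x) * C) + y * (A / (B * (C * (1 - y))))"
    unfolding xy using nz2 by (simp add: field_simps)
  then show ?thesis unfolding e1 e2 e3 A_def[symmetric] B_def[symmetric] C_def[symmetric] y_def[symmetric]
    by (simp add: mult.assoc)
qed

lemma pascal2:
  assumes q: "norm q < 1"
  shows "qbinom q (int (Suc n)) k = qbinom q (int n) k + q ^ nat (int n + 1 - k) * qbinom q (int n) (k - 1)"
proof -
  consider "k < 0" | "k = 0" | "1 \<le> k \<and> k \<le> int n" | "k = int n + 1" | "k > int n + 1" by linarith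
  then show ?thesis
  proof cases
    case 3
    define m where "m = nat k - 1"
    define d where "d = n - nat k"
    have k: "k = int (Suc m)" and n: "n = Suc (m + d)" using 3 unfolding m_def d_def by auto
    have h1: "nat (int n + 1 - k) = Suc d" using k n by simp
    have h2: "nat k = Suc m" "nat (k - 1) = m" "Suc n - Suc m = Suc d" "n - Suc m = d" "n - m = Suc d"
      using k n by auto
    show ?thesis unfolding qbinom_closed h1 h2 using pascal_main[OF q, of m d] 3 n
      by simp
  qed (unfold qbinom_closed, auto simp: qpoch_nz[OF q] nat_add_distrib)
qed



definition Fs :: "complex \<Rightarrow> nat \<Rightarrow> int \<Rightarrow> complex" where
  "Fs q n c = (\<Sum>b\<le>n. (-1)^b * q ^ nat (choose2 (c - int b)) * qbinom q (int n) (int b))"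

lemma F_rec:
  assumes q: "norm q < 1" and c: "c \<le> int n + 1"
  shows "Fs q (Suc n) c = (1 - q ^ nat (int n + 1 - c)) * Fs q n c"
proof -
  define t1 where "t1 b = (-1)^b * q ^ nat (choose2 (c - int b)) * qbinom q (int n) (int b)" for b
  define t2 where "t2 b = (-1)^b * q ^ nat (choose2 (c - int b)) * (q ^ nat (int n + 1 - int b) * qbinom q (int n) (int b - 1))" for b
  have "Fs q (Suc n) c = (\<Sum>b\<le>Suc n. t1 b + t2 b)"
    unfolding Fs_def t1_def t2_def pascal2[OF q] by (simp add: algebra_simps)
  also have "\<dots> = (\<Sum>b\<le>Suc n. t1 b) + (\<Sum>b\<le>Suc n. t2 b)" by (rule sum.distrib)
  also have "(\<Sum>b\<le>Suc n. t1 b) = Fs q n c"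
    unfolding sum.atMost_Suc Fs_def t1_def by (simp add: qbinom_closed)
  also have "(\<Sum>b\<le>Suc n. t2 b) = t2 0 + (\<Sum>b\<le>n. t2 (Suc b))" by (rule sum.atMost_Suc_shift)
  also have "t2 0 = 0" unfolding t2_def by (simp add: qbinom_closed)
  also have "(\<Sum>b\<le>n. t2 (Suc b)) = (\<Sum>b\<le>n. (- (q ^ nat (int n + 1 - c))) * t1 b)"
  proof (rule sum.cong[OF refl])
    fix b assume b: "b \<in> {..n}"
    have r: "choose2 (c - int b) = choose2 (c - int b - 1) + (c - int b - 1)" using choose2_rec by blast
    have "nat (choose2 (c - int (Suc b))) + nat (int n + 1 - int (Suc b)) = nat (int n + 1 - c) + nat (choose2 (c - int b))"
      using r b c choose2_nn[of "c - int b - 1"] choose2_nn[of "c - int b"] by (simp add: algebra_simps)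
    then have "q ^ nat (choose2 (c - int (Suc b))) * q ^ nat (int n + 1 - int (Suc b)) = q ^ nat (int n + 1 - c) * q ^ nat (choose2 (c - int b))"
      by (metis power_add)
    then show "t2 (Suc b) = (- (q ^ nat (int n + 1 - c))) * t1 b"
      unfolding t1_def t2_def by (simp add: algebra_simps)
  qed
  also have "\<dots> = (- (q ^ nat (int n + 1 - c))) * Fs q n c"
    unfolding Fs_def t1_def by (simp add: sum_distrib_left)
  finally show ?thesis by (simp add: algebra_simps)
qed

lemma F_0: "norm q < 1 \<Longrightarrow> Fs q n 0 = qpoch q q n"
proof (induction n)
  case 0
  then show ?case by (simp add: Fs_def qbinom_closed[of q 0, simplified] choose2_def)
next
  case (Suc n)
  then show ?case using F_rec[of q 0 n] by (simp add: qpoch_Suc nat_add_distrib mult.commute)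
qed

lemma F_diag: "norm q < 1 \<Longrightarrow> Fs q (Suc m) (int (Suc m)) = 0"
  using F_rec[of q "int (Suc m)" m] by simp

lemma F_zero_aux: "norm q < 1 \<Longrightarrow> Fs q (Suc m + k) (int (Suc m)) = 0"
proof (induction k)
  case 0 then show ?case using F_diag by simp
next
  case (Suc k)
  then show ?case using F_rec[of q "int (Suc m)" "Suc m + k"] by simp
qed

lemma F_zero: "norm q < 1 \<Longrightarrow> 1 \<le> c \<Longrightarrow> c \<le> int n \<Longrightarrow> Fs q n c = 0"
  using F_zero_aux[of q "nat c - 1" "n - nat c"] by (simp add: Suc_diff_1)



lemma inner:
  "(\<Sum>j\<in>{-int M-1..int M}. (-1::complex) powi (i+j) * q ^ nat (choose2 (i+j+1)) * qbinom q (2*int M+1) (int M - j))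
   = (-1) powi (i + int M) * Fs q (2*M+1) (i + int M + 1)"
proof -
  have "(\<Sum>b\<le>2*M+1. (-1) powi (i + int M) * ((-1)^b * q ^ nat (choose2 (i + int M + 1 - int b)) * qbinom q (int (2*M+1)) (int b)))
     = (\<Sum>j\<in>{-int M-1..int M}. (-1::complex) powi (i+j) * q ^ nat (choose2 (i+j+1)) * qbinom q (2*int M+1) (int M - j))"
  proof (rule sum.reindex_bij_witness[of _ "\<lambda>j. nat (int M - j)" "\<lambda>b. int M - int b"])
    fix b assume "b \<in> {..2*M+1}"
    show "(-1) powi (i + (int M - int b)) * q ^ nat (choose2 (i + (int M - int b) + 1)) * qbinom q (2*int M+1) (int M - (int M - int b))
      = (-1) powi (i + int M) * ((-1)^b * q ^ nat (choose2 (i + int M + 1 - int b)) * qbinom q (int (2*M+1)) (int b))"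
      by (simp add: neg1_powi minus_one_power_iff algebra_simps)
  qed auto
  then show ?thesis by (simp only: Fs_def sum_distrib_left)
qed



definition tt :: "complex \<Rightarrow> nat \<Rightarrow> nat \<Rightarrow> int \<times> int \<Rightarrow> complex" where
"tt q L M = (\<lambda>(i::int, j::int). (-1::complex) powi (i + j) * q ^ nat (choose2 (i + j + 1))
            * qbinom q (2 * int L + 1) (int L - i) * qbinom q (2 * int M + 1) (int M - j))"

lemma qbinom_top: "norm q < 1 \<Longrightarrow> qbinom q (2*int M+1) (2*int M+1) = 1"
proof -
  have e: "2*int M+1 = int (2*M+1)" by simp
  show "norm q < 1 \<Longrightarrow> ?thesis" unfolding e qbinom_closed using qpoch_nz[of q "2*M+1"] by (simp add: nat_add_distrib nat_mult_distrib)
qed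

lemma qbinom_out: "k < 0 \<or> k > 2 * int L + 1 \<Longrightarrow> qbinom q (2*int L+1) k = 0"
proof -
  have e: "2*int L+1 = int (2*L+1)" by simp
  show "k < 0 \<or> k > 2 * int L + 1 \<Longrightarrow> ?thesis" unfolding e qbinom_closed by auto
qed

lemma core_sum:
  assumes q: "norm q < 1" and LM: "L \<le> M"
  shows "sum (tt q L M) ({-int L-1..int L} \<times> {-int M-1..int M}) = - qpoch q q (2 * L + 1) * (if L = M then 1 else 0)"
proof -
  define g where "g i = qbinom q (2 * int L + 1) (int L - i) * ((-1) powi (i + int M) * Fs q (2*M+1) (i + int M + 1))" for i
  have "sum (tt q L M) ({-int L-1..int L} \<times> {-int M-1..int M})
      = (\<Sum>i\<in>{-int L-1..int L}. \<Sum>j\<in>{-int M-1..int M}. qbinom q (2 * int L + 1) (int L - i) *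
          ((-1::complex) powi (i+j) * q ^ nat (choose2 (i+j+1)) * qbinom q (2*int M+1) (int M - j)))"
    unfolding tt_def sum.cartesian_product by (rule sum.cong) (auto simp: algebra_simps)
  also have "\<dots> = (\<Sum>i\<in>{-int L-1..int L}. g i)"
    unfolding g_def sum_distrib_left[symmetric] inner ..
  finally have S: "sum (tt q L M) ({-int L-1..int L} \<times> {-int M-1..int M}) = (\<Sum>i\<in>{-int L-1..int L}. g i)" .
  have gz: "g i = 0" if "-int M \<le> i" "i \<le> int M" for i
  proof -
    have "Fs q (2*M+1) (i + int M + 1) = 0" using that by (intro F_zero[OF q]) auto
    then show ?thesis unfolding g_def by simp
  qed
  show ?thesis
  proof (cases "L = M")
    case True
    have I: "{-int L-1..int L} = insert (-int M-1) {-int M..int M}" using True by auto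
    have "(\<Sum>i\<in>{-int L-1..int L}. g i) = g (-int M-1)"
      unfolding I by (subst sum.insert) (auto simp: gz)
    also have "\<dots> = - qpoch q q (2 * L + 1)"
      unfolding g_def using True qbinom_top[OF q, of M] F_0[OF q, of "2*M+1"] by simp
    finally show ?thesis using S True by simp
  next
    case False
    then have "L < M" using LM by simp
    then have "(\<Sum>i\<in>{-int L-1..int L}. g i) = 0" by (intro sum.neutral) (auto intro!: gz)
    then show ?thesis using S False by simp
  qed
qed

lemma core:
  assumes q: "norm q < 1" and LM: "L \<le> M"
  shows "(tt q L M has_sum (- qpoch q q (2 * L + 1) * (if L = M then 1 else 0))) UNIV"
proof -
  have "(tt q L M has_sum (- qpoch q q (2 * L + 1) * (if L = M then 1 else 0))) ({-int L-1..int L} \<times> {-int M-1..int M})"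
    using core_sum[OF assms] by (intro has_sum_finiteI) auto
  moreover have "tt q L M x = 0" if "x \<notin> {-int L-1..int L} \<times> {-int M-1..int M}" for x
  proof -
    obtain i j where x: "x = (i, j)" by force
    have "int L - i < 0 \<or> int L - i > 2 * int L + 1 \<or> int M - j < 0 \<or> int M - j > 2 * int M + 1"
      using that x by auto
    then show ?thesis unfolding x tt_def using qbinom_out[of "int L - i" L q] qbinom_out[of "int M - j" M q]
      by auto
  qed
  ultimately show ?thesis by (subst (asm) has_sum_cong_neutral[of _ _ "tt q L M"]) auto
qed



theorem mainTheorem1:
  fixes q :: complex and L M :: nat
  assumes "norm q < 1"
  shows "((\<lambda>(i::int, j::int).
            (-1::complex) powi (i + j) * q ^ nat (choose2 (i + j + 1))
            * qbinom q (2 * int L + 1) (int L - i)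
            * qbinom q (2 * int M + 1) (int M - j))
          has_sum (- qpoch q q (2 * L + 1) * (if L = M then 1 else 0))) UNIV"
proof (cases "L \<le> M")
  case True
  then show ?thesis using core[OF assms True] unfolding tt_def by simp
next
  case False
  have h: "(tt q M L has_sum 0) UNIV" using core[OF assms, of M L] False by simp
  have sw: "tt q L M = tt q M L \<circ> prod.swap"
    unfolding tt_def by (auto simp: fun_eq_iff add.commute mult.commute mult.left_commute)
  have "(tt q L M has_sum 0) UNIV"
    unfolding sw using has_sum_reindex[of prod.swap UNIV "tt q M L" 0] h by simp
  then show ?thesis using False unfolding tt_def by simp
qed


end
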